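(* Let $Y$ be a real normed linear space and let $T\in L(\ell_1^n,Y)$, $T\neq\theta$, be approximately smooth (i.e. $\varepsilon$-smooth for some $\varepsilon\in[0,2)$). Then $M_T=\{\pm u\}$ for some $u\in\operatorname{Ext}B_{\ell_1^n}$.
   Context: $\ell_1^n$ is $\mathbb{R}^n$ with the $\ell_1$ norm; $L(\ell_1^n,Y)$ is the space of bounded linear operators with operator norm, and smoothness refers to $T$ as an element of this space. For a normed space $Z$ and $z\neq\theta$, $J(z)=\{\phi\in S_{Z^*}:\phi(z)=\|z\|\}$, and $z$ is $\varepsilon$-smooth if $\sup_{\phi,\psi\in J(z)}\|\phi-\psi\|\le\varepsilon$. $M_T=\{x\in S_{\ell_1^n}:\|Tx\|=\|T\|\}$; $\operatorname{Ext}B_{\ell_1^n}$ is the set of extreme points of the closed unit ball of $\ell_1^n$. *)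

theory Defs
  imports "HOL-Analysis.Analysis"
begin

text \<open>ell_1^n is modelled as real^'n (n = CARD('n)) equipped with the l1 norm.\<close>

definition l1norm :: "real^'n \<Rightarrow> real" where
  "l1norm x = (\<Sum>i\<in>UNIV. \<bar>x $ i\<bar>)"

definition opnorm1 :: "(real^'n \<Rightarrow> 'b::real_normed_vector) \<Rightarrow> real" where
  "opnorm1 T = Sup ((\<lambda>x. norm (T x)) ` {x. l1norm x \<le> 1})"

text \<open>The space L(ell_1^n, Y) (all linear maps are bounded, domain finite-dimensional).\<close>
definition Lsp :: "(real^'n \<Rightarrow> 'b::real_normed_vector) set" where
  "Lsp = {T. linear T}"

text \<open>Norm of a functional on L(ell_1^n, Y) (only its values on Lsp matter).\<close>
definition dual_norm :: "((real^'n \<Rightarrow> 'b::real_normed_vector) \<Rightarrow> real) \<Rightarrow> real" where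
  "dual_norm \<phi> = Sup ((\<lambda>S. \<bar>\<phi> S\<bar>) ` {S \<in> Lsp. opnorm1 S \<le> 1})"

definition is_dual :: "((real^'n \<Rightarrow> 'b::real_normed_vector) \<Rightarrow> real) \<Rightarrow> bool" where
  "is_dual \<phi> \<longleftrightarrow>
     (\<forall>S\<in>Lsp. \<forall>R\<in>Lsp. \<forall>a b. \<phi> (\<lambda>x. a *\<^sub>R S x + b *\<^sub>R R x) = a * \<phi> S + b * \<phi> R) \<and>
     bdd_above ((\<lambda>S. \<bar>\<phi> S\<bar>) ` {S \<in> Lsp. opnorm1 S \<le> 1})"

definition Jset :: "(real^'n \<Rightarrow> 'b::real_normed_vector) \<Rightarrow> ((real^'n \<Rightarrow> 'b) \<Rightarrow> real) set" where
  "Jset T = {\<phi>. is_dual \<phi> \<and> dual_norm \<phi> = 1 \<and> \<phi> T = opnorm1 T}"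

definition eps_smooth :: "real \<Rightarrow> (real^'n \<Rightarrow> 'b::real_normed_vector) \<Rightarrow> bool" where
  "eps_smooth \<epsilon> T \<longleftrightarrow> T \<noteq> (\<lambda>x. 0) \<and>
     (\<forall>\<phi>\<in>Jset T. \<forall>\<psi>\<in>Jset T. dual_norm (\<lambda>S. \<phi> S - \<psi> S) \<le> \<epsilon>)"

definition M_set :: "(real^'n \<Rightarrow> 'b::real_normed_vector) \<Rightarrow> (real^'n) set" where
  "M_set T = {x. l1norm x = 1 \<and> norm (T x) = opnorm1 T}"

end

theory Submission
  imports Defs
begin


definition pgraph :: "('b::real_normed_vector \<times> real) set \<Rightarrow> bool" where
 "pgraph G \<longleftrightarrow> (0,0) \<in> G \<and> (\<forall>x a y b. (x,a)\<in>G \<longrightarrow> (y,b)\<in>G \<longrightarrow> (x+y, a+b)\<in>G)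
   \<and> (\<forall>x a t. (x,a)\<in>G \<longrightarrow> (t *\<^sub>R x, t*a)\<in>G) \<and> (\<forall>x a. (x,a)\<in>G \<longrightarrow> a \<le> norm x)"

lemma pgraph_fun:
  assumes "pgraph G" "(x,a)\<in>G" "(x,b)\<in>G" shows "a = b"
proof -
  have add: "\<And>x a y b. (x,a)\<in>G \<Longrightarrow> (y,b)\<in>G \<Longrightarrow> (x+y, a+b)\<in>G"
   and sc: "\<And>x a t. (x,a)\<in>G \<Longrightarrow> (t *\<^sub>R x, t*a)\<in>G"
   and bd: "\<And>x a. (x,a)\<in>G \<Longrightarrow> a \<le> norm x" using assms(1) unfolding pgraph_def by blast+
  have "(x + (-1) *\<^sub>R x, a + (-1)*b) \<in> G" by (rule add[OF assms(2) sc[OF assms(3)]])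
  hence "a + (-1)*b \<le> norm (x + (-1) *\<^sub>R x)" by (rule bd)
  moreover have "(x + (-1) *\<^sub>R x, b + (-1)*a) \<in> G" by (rule add[OF assms(3) sc[OF assms(2)]])
  hence "b + (-1)*a \<le> norm (x + (-1) *\<^sub>R x)" by (rule bd)
  ultimately show ?thesis by simp
qed

lemma pgraph_extend:
  assumes G: "pgraph G" and x0: "\<forall>a. (x0,a) \<notin> G"
  shows "\<exists>G'. pgraph G' \<and> G \<subset> G'"
proof -
  define L where "L = {a - norm (v - x0) | v a. (v,a)\<in>G}"
  define U where "U = {norm (w + x0) - b | w b. (w,b)\<in>G}"
  have LU: "l \<le> u" if lu: "l \<in> L" "u \<in> U" for l u
  proof -
    obtain v a where va: "(v,a)\<in>G" "l = a - norm (v - x0)" using lu L_def by blast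
    obtain w b where wb: "(w,b)\<in>G" "u = norm (w + x0) - b" using lu U_def by blast
    have "(v+w, a+b) \<in> G" using G va wb unfolding pgraph_def by blast
    hence "a + b \<le> norm (v + w)" using G unfolding pgraph_def by blast
    also have "norm (v+w) \<le> norm (v - x0) + norm (w + x0)"
      using norm_triangle_ineq[of "v - x0" "w + x0"] by simp
    finally show ?thesis using va wb by linarith
  qed
  have L0: "0 - norm (0 - x0) \<in> L" using G unfolding L_def pgraph_def by blast
  have U0: "norm (0 + x0) - 0 \<in> U" using G unfolding U_def pgraph_def by blast
  define c where "c = Sup L"
  have cL: "l \<le> c" if "l \<in> L" for l
    unfolding c_def by (rule cSup_upper[OF that]) (meson LU U0 bdd_aboveI)
  have cU: "c \<le> u" if "u \<in> U" for u
    unfolding c_def by (rule cSup_least) (use L0 LU that in auto)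
  define G' where "G' = {(v + t *\<^sub>R x0, a + t*c) | v a t. (v,a)\<in>G}"
  have bound: "a + t*c \<le> norm (v + t *\<^sub>R x0)" if "(v,a)\<in>G" for v a t
  proof (cases "t = 0")
    case True then show ?thesis using G that unfolding pgraph_def by auto
  next
    case False
    show ?thesis
    proof (cases "t > 0")
      case True
      have "(inverse t *\<^sub>R v, inverse t * a) \<in> G" using G that unfolding pgraph_def by blast
      hence "norm (inverse t *\<^sub>R v + x0) - inverse t * a \<in> U" unfolding U_def by blast
      hence "c \<le> norm (inverse t *\<^sub>R v + x0) - inverse t * a" by (rule cU)
      hence "t * c \<le> t * (norm (inverse t *\<^sub>R v + x0) - inverse t * a)" using True
        by (intro mult_left_mono) auto
      moreover have "t * (inverse t * a) = a" using True by simp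
      ultimately have "t * c \<le> t * norm (inverse t *\<^sub>R v + x0) - a"
        by (simp only: right_diff_distrib)
      also have "t * norm (inverse t *\<^sub>R v + x0) = norm (t *\<^sub>R (inverse t *\<^sub>R v + x0))"
        using True by simp
      also have "t *\<^sub>R (inverse t *\<^sub>R v + x0) = v + t *\<^sub>R x0" using True
        by (simp add: scaleR_add_right)
      finally show ?thesis by simp
    next
      case False
      hence s: "-t > 0" using \<open>t \<noteq> 0\<close> by simp
      define s where "s = -t"
      have "(inverse s *\<^sub>R v, inverse s * a) \<in> G" using G that unfolding pgraph_def by blast
      hence "inverse s * a - norm (inverse s *\<^sub>R v - x0) \<in> L" unfolding L_def by blast
      hence "inverse s * a - norm (inverse s *\<^sub>R v - x0) \<le> c" by (rule cL)
      hence "s * (inverse s * a - norm (inverse s *\<^sub>R v - x0)) \<le> s * c" using s s_def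
        by (intro mult_left_mono) auto
      moreover have "s * (inverse s * a) = a" using s s_def by simp
      ultimately have "a - s * norm (inverse s *\<^sub>R v - x0) \<le> s * c"
        by (simp only: right_diff_distrib)
      moreover have e2: "s *\<^sub>R (inverse s *\<^sub>R v - x0) = v + t *\<^sub>R x0" using s s_def
        by (simp add: scaleR_diff_right)
      moreover have e3: "norm (s *\<^sub>R (inverse s *\<^sub>R v - x0)) = s * norm (inverse s *\<^sub>R v - x0)"
        using s s_def by (simp only: norm_scaleR)
      moreover have "norm (v + t *\<^sub>R x0) = s * norm (inverse s *\<^sub>R v - x0)"
        using e2 e3 by metis
      moreover have "a + t * c = a - s * c" using s_def by simp
      ultimately show ?thesis by linarith
    qed
  qed
  have "pgraph G'"
    unfolding pgraph_def
  proof (intro conjI allI impI)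
    show "(0,0) \<in> G'" unfolding G'_def using G unfolding pgraph_def
      by (intro CollectI exI[of _ 0] conjI) auto
  next
    fix x a y b assume "(x,a)\<in>G'" "(y,b)\<in>G'"
    then obtain v1 a1 t1 v2 a2 t2 where "(v1,a1)\<in>G" "(v2,a2)\<in>G"
      "x = v1 + t1 *\<^sub>R x0" "a = a1 + t1*c" "y = v2 + t2 *\<^sub>R x0" "b = a2 + t2*c"
      unfolding G'_def by blast
    moreover have "(v1+v2, a1+a2) \<in> G" using G calculation unfolding pgraph_def by blast
    ultimately show "(x+y, a+b) \<in> G'" unfolding G'_def
      by (intro CollectI exI[of _ "v1+v2"] exI[of _ "a1+a2"] exI[of _ "t1+t2"])
         (simp add: algebra_simps)
  next
    fix x a t assume "(x,a)\<in>G'"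
    then obtain v1 a1 t1 where "(v1,a1)\<in>G" "x = v1 + t1 *\<^sub>R x0" "a = a1 + t1*c"
      unfolding G'_def by blast
    moreover have "(t *\<^sub>R v1, t*a1) \<in> G" using G calculation unfolding pgraph_def by blast
    ultimately show "(t *\<^sub>R x, t*a) \<in> G'" unfolding G'_def
      by (intro CollectI exI[of _ "t *\<^sub>R v1"] exI[of _ "t*a1"] exI[of _ "t*t1"])
         (simp add: algebra_simps)
  next
    fix x a assume "(x,a)\<in>G'"
    then show "a \<le> norm x" unfolding G'_def using bound by blast
  qed
  moreover have "G \<subseteq> G'" unfolding G'_def
  proof (clarify)
    fix v a assume "(v,a) \<in> G"
    then show "\<exists>v' a' t. (v, a) = (v' + t *\<^sub>R x0, a' + t * c) \<and> (v', a') \<in> G"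
      by (intro exI[of _ v] exI[of _ a] exI[of _ "0::real"]) simp
  qed
  moreover have "(x0, c) \<in> G'" unfolding G'_def using G unfolding pgraph_def
    by (intro CollectI exI[of _ 0] exI[of _ "0::real"] exI[of _ "1::real"]) auto
  ultimately show ?thesis using x0 by blast
qed

lemma seed_pgraph:
  fixes y :: "'b::real_normed_vector"
  shows "pgraph {p. \<exists>t. p = (t *\<^sub>R y, t * norm y)}"
  unfolding pgraph_def
proof (intro conjI allI impI)
  show "(0, 0) \<in> {p. \<exists>t. p = (t *\<^sub>R y, t * norm y)}"
    by (intro CollectI exI[of _ 0]) simp
next
  fix x a z b assume A: "(x,a) \<in> {p. \<exists>t. p = (t *\<^sub>R y, t * norm y)}" "(z,b) \<in> {p. \<exists>t. p = (t *\<^sub>R y, t * norm y)}"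
  from A obtain t1 where 1: "x = t1 *\<^sub>R y" "a = t1 * norm y" by blast
  from A obtain t2 where 2: "z = t2 *\<^sub>R y" "b = t2 * norm y" by blast
  have "(x+z, a+b) = ((t1+t2) *\<^sub>R y, (t1+t2) * norm y)" using 1 2 by (simp add: scaleR_add_left distrib_right)
  then show "(x+z, a+b) \<in> {p. \<exists>t. p = (t *\<^sub>R y, t * norm y)}" by blast
next
  fix x a s assume A: "(x,a) \<in> {p. \<exists>t. p = (t *\<^sub>R y, t * norm y)}"
  from A obtain t1 where 1: "x = t1 *\<^sub>R y" "a = t1 * norm y" by blast
  have "(s *\<^sub>R x, s*a) = ((s*t1) *\<^sub>R y, (s*t1) * norm y)" using 1 by simp
  then show "(s *\<^sub>R x, s*a) \<in> {p. \<exists>t. p = (t *\<^sub>R y, t * norm y)}" by blast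
next
  fix x a assume A: "(x,a) \<in> {p. \<exists>t. p = (t *\<^sub>R y, t * norm y)}"
  from A obtain t1 where 1: "x = t1 *\<^sub>R y" "a = t1 * norm y" by blast
  show "a \<le> norm x" using 1 mult_right_mono[OF abs_ge_self[of t1] norm_ge_zero[of y]] by simp
qed

lemma hahn_banach_norming:
  fixes y :: "'b::real_normed_vector"
  shows "\<exists>f::'b \<Rightarrow> real. (\<forall>x z. f (x+z) = f x + f z) \<and> (\<forall>t x. f (t *\<^sub>R x) = t * f x)
           \<and> (\<forall>z. \<bar>f z\<bar> \<le> norm z) \<and> f y = norm y"
proof -
  define S where "S = {p. \<exists>t. p = (t *\<^sub>R y, t * norm y)}"
  have S: "pgraph S" unfolding S_def by (rule seed_pgraph)
  define A where "A = {G. pgraph G \<and> S \<subseteq> G}"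
  have "\<exists>M\<in>A. \<forall>X\<in>A. M \<subseteq> X \<longrightarrow> X = M"
  proof (rule subset_Zorn)
    fix C assume C: "subset.chain A C"
    show "\<exists>U\<in>A. \<forall>X\<in>C. X \<subseteq> U"
    proof (cases "C = {}")
      case True have "S \<in> A" using S unfolding A_def by simp
        then show ?thesis using True by blast
    next
      case False
      have CA: "\<And>X. X \<in> C \<Longrightarrow> pgraph X \<and> S \<subseteq> X" using C unfolding subset_chain_def A_def by auto
      have ch: "\<And>X Y. X \<in> C \<Longrightarrow> Y \<in> C \<Longrightarrow> X \<subseteq> Y \<or> Y \<subseteq> X" using C unfolding subset_chain_def by blast
      obtain X0 where X0: "X0 \<in> C" using False by blast
      have Cadd: "\<And>X x a y b. X \<in> C \<Longrightarrow> (x,a)\<in>X \<Longrightarrow> (y,b)\<in>X \<Longrightarrow> (x+y, a+b)\<in>X"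
       and Csc: "\<And>X x a t. X \<in> C \<Longrightarrow> (x,a)\<in>X \<Longrightarrow> (t *\<^sub>R x, t*a)\<in>X"
       and Cbd: "\<And>X x a. X \<in> C \<Longrightarrow> (x,a)\<in>X \<Longrightarrow> a \<le> norm x"
       and C0: "\<And>X. X \<in> C \<Longrightarrow> (0,0) \<in> X"
        using CA by (auto simp: pgraph_def)
      have "pgraph (\<Union>C)" unfolding pgraph_def
      proof (intro conjI allI impI)
        show "(0,0) \<in> \<Union>C" using X0 C0 by blast
      next
        fix x a z b assume "(x,a) \<in> \<Union>C" "(z,b) \<in> \<Union>C"
        then obtain X Y where XY: "X\<in>C" "Y\<in>C" "(x,a)\<in>X" "(z,b)\<in>Y" by blast
        show "(x+z, a+b) \<in> \<Union>C"
        proof (cases "X \<subseteq> Y")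
          case True then show ?thesis using Cadd[of Y x a z b] XY by blast
        next
          case False then have "Y \<subseteq> X" using ch XY by blast
          then show ?thesis using Cadd[of X x a z b] XY by blast
        qed
      next
        fix x a t assume "(x,a) \<in> \<Union>C"
        then show "(t *\<^sub>R x, t*a) \<in> \<Union>C" using Csc by blast
      next
        fix x a assume "(x,a) \<in> \<Union>C"
        then show "a \<le> norm x" using Cbd by blast
      qed
      moreover have "S \<subseteq> \<Union>C" using X0 CA by blast
      ultimately have "\<Union>C \<in> A" unfolding A_def by simp
      then show ?thesis by blast
    qed
  qed
  then obtain M where MA: "M \<in> A" and mx: "\<forall>X\<in>A. M \<subseteq> X \<longrightarrow> X = M" by blast
  have M: "pgraph M" "S \<subseteq> M" using MA unfolding A_def by simp_all
  have max: "\<And>X. pgraph X \<Longrightarrow> S \<subseteq> X \<Longrightarrow> M \<subseteq> X \<Longrightarrow> X = M"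
    using mx unfolding A_def by simp
  have dom: "\<exists>a. (x,a) \<in> M" for x
  proof (rule ccontr)
    assume "\<not> ?thesis"
    then obtain G' where "pgraph G'" "M \<subset> G'" using pgraph_extend[OF M(1)] by blast
    then show False using max[of G'] M(2) by blast
  qed
  define f where "f x = (SOME a. (x,a) \<in> M)" for x
  have fM: "(x, f x) \<in> M" for x unfolding f_def using dom[of x] by (rule someI_ex)
  have fe: "f x = a" if "(x,a)\<in>M" for x a using pgraph_fun[OF M(1) fM that] .
  have Madd: "\<And>x a y b. (x,a)\<in>M \<Longrightarrow> (y,b)\<in>M \<Longrightarrow> (x+y, a+b)\<in>M"
   and Msc: "\<And>x a t. (x,a)\<in>M \<Longrightarrow> (t *\<^sub>R x, t*a)\<in>M"
   and Mbd: "\<And>x a. (x,a)\<in>M \<Longrightarrow> a \<le> norm x" using M(1) by (auto simp: pgraph_def)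
  have add: "f (x+z) = f x + f z" for x z
    by (rule fe[OF Madd[OF fM fM]])
  have sc: "f (t *\<^sub>R x) = t * f x" for t x
    by (rule fe[OF Msc[OF fM]])
  have le: "f z \<le> norm z" for z by (rule Mbd[OF fM])
  have "\<bar>f z\<bar> \<le> norm z" for z
    using le[of z] le[of "(-1) *\<^sub>R z"] sc[of "-1" z] by simp
  moreover have "(y, norm y) \<in> S" unfolding S_def by (intro CollectI exI[of _ 1]) simp
  hence "f y = norm y" using fe[of y "norm y"] M(2) by auto
  ultimately show ?thesis using add sc by (intro exI[of _ f]) blast
qed



lemma vec_expand: "(x::real^'n) = (\<Sum>i\<in>UNIV. x$i *\<^sub>R axis i 1)"
  by (simp add: vec_eq_iff axis_def if_distrib sum.If_cases)

lemma lin_expand: "linear S \<Longrightarrow> S x = (\<Sum>i\<in>UNIV. x$i *\<^sub>R S (axis i 1))"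
  apply (subst vec_expand[of x])
  by (simp add: linear_sum linear_scale)

lemma norm_lin_le: "linear S \<Longrightarrow> norm (S x) \<le> (\<Sum>i\<in>UNIV. \<bar>x$i\<bar> * norm (S (axis i 1)))"
proof -
  assume "linear S"
  hence "norm (S x) = norm (\<Sum>i\<in>UNIV. x$i *\<^sub>R S (axis i 1))" by (simp add: lin_expand[of S x])
  also have "\<dots> \<le> (\<Sum>i\<in>UNIV. norm (x$i *\<^sub>R S (axis i 1)))" by (rule norm_sum)
  finally show ?thesis by simp
qed

lemma norm_lin_leK: "linear S \<Longrightarrow> (\<And>i. norm (S (axis i 1)) \<le> K) \<Longrightarrow> norm (S x) \<le> l1norm x * K"
proof -
  assume a: "linear S" "\<And>i. norm (S (axis i 1)) \<le> K"
  have "norm (S x) \<le> (\<Sum>i\<in>UNIV. \<bar>x$i\<bar> * norm (S (axis i 1)))" by (rule norm_lin_le[OF a(1)])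
  also have "\<dots> \<le> (\<Sum>i\<in>UNIV. \<bar>x$i\<bar> * K)" by (intro sum_mono mult_left_mono a(2)) auto
  also have "\<dots> = l1norm x * K" by (simp add: l1norm_def sum_distrib_right)
  finally show ?thesis .
qed

lemma l1norm_nonneg: "0 \<le> l1norm x" by (simp add: l1norm_def sum_nonneg)

lemma l1norm_zero: "l1norm (0::real^'n) = 0" by (simp add: l1norm_def)

lemma opnorm1_le: "linear S \<Longrightarrow> (\<And>i. norm (S (axis i 1)) \<le> K) \<Longrightarrow> 0 \<le> K \<Longrightarrow> opnorm1 S \<le> K"
  unfolding opnorm1_def
proof (rule cSup_least)
  have "(0::real^'n) \<in> {x. l1norm x \<le> 1}" by (simp add: l1norm_def)
  then show "(\<lambda>x. norm (S x)) ` {x. l1norm x \<le> 1} \<noteq> {}" by blast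
next
  fix r assume "linear S" "\<And>i. norm (S (axis i 1)) \<le> K" "0 \<le> K" "r \<in> (\<lambda>x. norm (S x)) ` {x. l1norm x \<le> 1}"
  then obtain x where x: "l1norm x \<le> 1" "r = norm (S x)" by blast
  have "norm (S x) \<le> l1norm x * K" by (rule norm_lin_leK) fact+
  also have "\<dots> \<le> 1 * K" by (rule mult_right_mono) fact+
  finally show "r \<le> K" using x by simp
qed

lemma opnorm1_bdd: "linear S \<Longrightarrow> bdd_above ((\<lambda>x. norm (S x)) ` {x. l1norm (x::real^'n) \<le> 1})"
proof -
  assume S: "linear S"
  define K where "K = (\<Sum>i\<in>UNIV. norm (S (axis i 1)))"
  have Ki: "norm (S (axis i 1)) \<le> K" for i unfolding K_def
    by (rule member_le_sum) auto
  have K0: "0 \<le> K" unfolding K_def by (simp add: sum_nonneg)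
  show ?thesis
  proof (rule bdd_aboveI)
    fix r assume "r \<in> (\<lambda>x. norm (S x)) ` {x. l1norm x \<le> 1}"
    then obtain x where x: "l1norm x \<le> 1" "r = norm (S x)" by blast
    have "norm (S x) \<le> l1norm x * K" by (rule norm_lin_leK[OF S Ki])
    also have "\<dots> \<le> 1 * K" by (rule mult_right_mono) fact+
    finally show "r \<le> K" using x by simp
  qed
qed

lemma opnorm1_ge: "linear S \<Longrightarrow> l1norm x \<le> 1 \<Longrightarrow> norm (S x) \<le> opnorm1 S"
  unfolding opnorm1_def by (rule cSup_upper) (auto intro: opnorm1_bdd)

lemma l1norm_axis: "l1norm (axis i 1 :: real^'n) = 1"
  by (simp add: l1norm_def axis_def)

lemma l1norm_neg: "l1norm (- x) = l1norm x"
  by (simp add: l1norm_def)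

lemma l1norm_split: "l1norm x = \<bar>x$i\<bar> + (\<Sum>k\<in>UNIV-{i}. \<bar>x$k\<bar>)"
  unfolding l1norm_def by (simp add: sum.remove[of UNIV i])

lemma comp_le_l1: "\<bar>x$i\<bar> \<le> l1norm x"
  using l1norm_split[of x i] by (simp add: sum_nonneg)



lemma Jmem:
  fixes T :: "real^'n \<Rightarrow> 'b::real_normed_vector" and f :: "'b \<Rightarrow> real"
  assumes T: "linear T" and K: "opnorm1 T > 0"
    and fadd: "\<And>x z. f (x+z) = f x + f z" and fsc: "\<And>t x. f (t *\<^sub>R x) = t * f x"
    and fb: "\<And>z. \<bar>f z\<bar> \<le> norm z" and fT: "f (T (axis i 1)) = opnorm1 T"
  shows "(\<lambda>S. f (S (axis i 1))) \<in> Jset T"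
proof -
  let ?K = "opnorm1 T"
  let ?B = "(\<lambda>S. \<bar>f (S (axis i 1))\<bar>) ` {S \<in> Lsp. opnorm1 S \<le> 1}"
  have bnd: "r \<le> 1" if r: "r \<in> ?B" for r
  proof -
    from r obtain S where S0: "S \<in> {S \<in> Lsp. opnorm1 S \<le> 1}" and rS: "r = \<bar>f (S (axis i 1))\<bar>"
      by (rule imageE)
    have S: "linear S" "opnorm1 S \<le> 1" using S0 unfolding Lsp_def by simp_all
    have "\<bar>f (S (axis i 1))\<bar> \<le> norm (S (axis i 1))" by (rule fb)
    also have "\<dots> \<le> opnorm1 S" by (rule opnorm1_ge[OF S(1)]) (simp add: l1norm_axis)
    finally show ?thesis using S rS by simp
  qed
  have bdd: "bdd_above ?B" using bnd by (intro bdd_aboveI)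
  have lin: "f (a *\<^sub>R S (axis i 1) + b *\<^sub>R R (axis i 1)) = a * f (S (axis i 1)) + b * f (R (axis i 1))"
    for a b and S R :: "real^'n \<Rightarrow> 'b" by (simp only: fadd fsc)
  have dual: "is_dual (\<lambda>S. f (S (axis i 1)))"
    unfolding is_dual_def using bdd lin by blast
  define S0 where "S0 = (\<lambda>x. inverse ?K *\<^sub>R T x)"
  have S0l: "linear S0"
    by (rule linearI) (simp_all add: S0_def linear_add[OF T] linear_scale[OF T] scaleR_add_right)
  have "opnorm1 S0 \<le> 1"
  proof (rule opnorm1_le[OF S0l])
    fix k
    have "norm (T (axis k 1)) \<le> ?K" by (rule opnorm1_ge[OF T]) (simp add: l1norm_axis)
    hence "inverse ?K * norm (T (axis k 1)) \<le> inverse ?K * ?K"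
      using K by (intro mult_left_mono) auto
    also have "inverse ?K * ?K = 1" using K by simp
    finally show "norm (S0 (axis k 1)) \<le> 1" unfolding S0_def using K by simp
  qed simp
  hence S0in: "S0 \<in> {S \<in> Lsp. opnorm1 S \<le> 1}" using S0l unfolding Lsp_def by simp
  have "f (S0 (axis i 1)) = inverse ?K * ?K" unfolding S0_def by (simp only: fsc fT)
  hence "1 = \<bar>f (S0 (axis i 1))\<bar>" using K by simp
  hence "1 \<in> ?B" using S0in by (rule image_eqI)
  hence "1 \<le> Sup ?B" using bdd by (rule cSup_upper)
  moreover have "Sup ?B \<le> 1"
  proof (rule cSup_least)
    show "?B \<noteq> {}" using \<open>1 \<in> ?B\<close> by blast
  next
    fix x assume "x \<in> ?B" then show "x \<le> 1" by (rule bnd)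
  qed
  moreover have "dual_norm (\<lambda>S. f (S (axis i 1))) = Sup ?B" unfolding dual_norm_def by (rule refl)
  ultimately have dn: "dual_norm (\<lambda>S. f (S (axis i 1))) = 1" by linarith
  have "is_dual (\<lambda>S. f (S (axis i 1))) \<and> dual_norm (\<lambda>S. f (S (axis i 1))) = 1 \<and> f (T (axis i 1)) = opnorm1 T"
    using dual dn fT by blast
  then show ?thesis unfolding Jset_def by (simp only: mem_Collect_eq)
qed


lemma l1_unit_comp:
  assumes "l1norm (a::real^'n) \<le> 1" "1 \<le> \<bar>a$i\<bar>" "k \<noteq> i"
  shows "a$k = 0"
proof -
  have "(\<Sum>k\<in>UNIV-{i}. \<bar>a$k\<bar>) \<le> 0" using l1norm_split[of a i] assms(1,2) by linarith
  moreover have "0 \<le> (\<Sum>k\<in>UNIV-{i}. \<bar>a$k\<bar>)" by (simp add: sum_nonneg)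
  ultimately have "(\<Sum>k\<in>UNIV-{i}. \<bar>a$k\<bar>) = 0" by linarith
  hence "\<forall>k\<in>UNIV-{i}. \<bar>a$k\<bar> = 0" by (subst (asm) sum_nonneg_eq_0_iff) auto
  thus ?thesis using assms(3) by simp
qed

lemma axis_extreme: "axis i 1 extreme_point_of {x::real^'n. l1norm x \<le> 1}"
  unfolding extreme_point_of_def
proof (intro conjI ballI)
  show "axis i 1 \<in> {x::real^'n. l1norm x \<le> 1}" by (simp add: l1norm_axis)
next
  fix a b :: "real^'n" assume a: "a \<in> {x. l1norm x \<le> 1}" and b: "b \<in> {x. l1norm x \<le> 1}"
  show "axis i 1 \<notin> open_segment a b"
  proof
    assume "axis i 1 \<in> open_segment a b"
    hence cs: "axis i 1 \<in> closed_segment a b" and na: "axis i 1 \<noteq> a" and nb: "axis i 1 \<noteq> b"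
      unfolding open_segment_def by auto
    from cs obtain t where t: "0 \<le> t" "t \<le> 1" "axis i 1 = (1 - t) *\<^sub>R a + t *\<^sub>R b"
      unfolding closed_segment_def by blast
    have ai: "a$i \<le> 1" using comp_le_l1[of a i] a by simp
    have bi: "b$i \<le> 1" using comp_le_l1[of b i] b by simp
    have eq: "1 = (1 - t) * a$i + t * b$i"
    proof -
      have "(axis i 1 :: real^'n) $ i = ((1 - t) *\<^sub>R a + t *\<^sub>R b) $ i" using t(3) by simp
      thus ?thesis by (simp add: axis_def)
    qed
    show False
    proof (cases "t = 1")
      case True then show False using t(3) nb by simp
    next
      case False
      hence t1: "t < 1" using t(2) by simp
      have "a$i = 1"
      proof (rule ccontr)
        assume "a$i \<noteq> 1"
        hence "a$i < 1" using ai by simp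
        hence "(1 - t) * a$i < (1 - t) * 1" using t1 by (intro mult_strict_left_mono) auto
        hence A: "(1 - t) * a$i < 1 - t" by simp
        have "t * b$i \<le> t * 1" using bi t(1) by (intro mult_left_mono) auto
        hence B: "t * b$i \<le> t" by simp
        show False using A B eq by linarith
      qed
      hence "a$k = 0" if "k \<noteq> i" for k using l1_unit_comp[of a i k] a that by simp
      hence "a = axis i 1" using \<open>a$i = 1\<close> by (simp add: vec_eq_iff axis_def)
      thus False using na by simp
    qed
  qed
qed

lemma fS_bound:
  assumes "linear S" "\<And>z. \<bar>f z\<bar> \<le> norm z"
  shows "\<bar>f (S (axis i 1))\<bar> \<le> opnorm1 S"
proof -
  have "\<bar>f (S (axis i 1))\<bar> \<le> norm (S (axis i 1))" by (rule assms(2))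
  also have "\<dots> \<le> opnorm1 S" by (rule opnorm1_ge[OF assms(1)]) (simp add: l1norm_axis)
  finally show ?thesis .
qed

theorem proposition3p3:
  fixes T :: "real^'n \<Rightarrow> 'b::real_normed_vector" and \<epsilon> :: real
  assumes "linear T" and "T \<noteq> (\<lambda>x. 0)"
    and "0 \<le> \<epsilon>" and "\<epsilon> < 2" and "eps_smooth \<epsilon> T"
  shows "\<exists>u. u extreme_point_of {x. l1norm x \<le> 1} \<and> M_set T = {u, -u}"
proof -
  note T = assms(1)
  define nT where "nT i = norm (T (axis i 1))" for i
  obtain i0 where i0max: "\<And>i. nT i \<le> nT i0"
  proof -
    have "Max (range nT) \<in> range nT" by (rule Max_in) auto
    then obtain i0 where "Max (range nT) = nT i0" by blast
    moreover have "nT i \<le> Max (range nT)" for i by (rule Max_ge) auto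
    ultimately show ?thesis using that by metis
  qed
  define K where "K = opnorm1 T"
  have K: "K = nT i0"
  proof (rule antisym)
    show "K \<le> nT i0" unfolding K_def
      by (rule opnorm1_le[OF T]) (use i0max in \<open>auto simp: nT_def\<close>)
    show "nT i0 \<le> K" unfolding K_def nT_def by (rule opnorm1_ge[OF T]) (simp add: l1norm_axis)
  qed
  have nTK: "nT i \<le> K" for i using K i0max by simp
  have Kpos: "K > 0"
  proof (rule ccontr)
    assume "\<not> K > 0"
    hence "nT i \<le> 0" for i using nTK[of i] by simp
    hence "T (axis i 1) = 0" for i by (simp add: nT_def)
    hence "T x = 0" for x using lin_expand[OF T, of x] by simp
    hence "T = (\<lambda>x. 0)" by (rule ext)
    with assms(2) show False by simp
  qed
  show ?thesis
  proof (cases "\<exists>j. j \<noteq> i0 \<and> nT j = K")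
    case True
    then obtain j where j: "j \<noteq> i0" "nT j = K" by blast
    obtain f :: "'b \<Rightarrow> real" where f: "\<And>x z. f (x+z) = f x + f z" "\<And>t x. f (t *\<^sub>R x) = t * f x"
      "\<And>z. \<bar>f z\<bar> \<le> norm z" "f (T (axis i0 1)) = norm (T (axis i0 1))"
      using hahn_banach_norming[of "T (axis i0 1)"] by blast
    obtain g :: "'b \<Rightarrow> real" where g: "\<And>x z. g (x+z) = g x + g z" "\<And>t x. g (t *\<^sub>R x) = t * g x"
      "\<And>z. \<bar>g z\<bar> \<le> norm z" "g (T (axis j 1)) = norm (T (axis j 1))"
      using hahn_banach_norming[of "T (axis j 1)"] by blast
    have fT: "f (T (axis i0 1)) = opnorm1 T" using f(4) K unfolding K_def nT_def by simp
    have gT: "g (T (axis j 1)) = opnorm1 T" using g(4) j(2) unfolding K_def nT_def by simp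
    have Kpos': "opnorm1 T > 0" using Kpos unfolding K_def .
    define \<phi> where "\<phi> = (\<lambda>S::real^'n \<Rightarrow> 'b. f (S (axis i0 1)))"
    define \<psi> where "\<psi> = (\<lambda>S::real^'n \<Rightarrow> 'b. g (S (axis j 1)))"
    have \<phi>J: "\<phi> \<in> Jset T" unfolding \<phi>_def by (rule Jmem[OF T Kpos' f(1) f(2) f(3) fT])
    have \<psi>J: "\<psi> \<in> Jset T" unfolding \<psi>_def by (rule Jmem[OF T Kpos' g(1) g(2) g(3) gT])
    have le\<epsilon>: "dual_norm (\<lambda>S. \<phi> S - \<psi> S) \<le> \<epsilon>"
      using assms(5) \<phi>J \<psi>J unfolding eps_smooth_def by blast
    let ?B = "(\<lambda>S. \<bar>\<phi> S - \<psi> S\<bar>) ` {S \<in> Lsp. opnorm1 S \<le> 1}"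
    have bnd: "r \<le> 2" if r: "r \<in> ?B" for r
    proof -
      from r obtain S where S0: "S \<in> {S \<in> Lsp. opnorm1 S \<le> 1}" and rS: "r = \<bar>\<phi> S - \<psi> S\<bar>"
        by (rule imageE)
      have S: "linear S" "opnorm1 S \<le> 1" using S0 unfolding Lsp_def by simp_all
      have "\<bar>\<phi> S\<bar> \<le> opnorm1 S" unfolding \<phi>_def by (rule fS_bound[OF S(1) f(3)])
      moreover have "\<bar>\<psi> S\<bar> \<le> opnorm1 S" unfolding \<psi>_def by (rule fS_bound[OF S(1) g(3)])
      ultimately show ?thesis using S(2) rS by linarith
    qed
    have bdd: "bdd_above ?B" using bnd by (intro bdd_aboveI)
    define S1 where "S1 = (\<lambda>x::real^'n. (inverse K * x$i0) *\<^sub>R T (axis i0 1) - (inverse K * x$j) *\<^sub>R T (axis j 1))"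
    have S1l: "linear S1"
      by (rule linearI) (simp_all add: S1_def algebra_simps)
    have S1i0: "S1 (axis i0 1) = inverse K *\<^sub>R T (axis i0 1)" using j(1) by (simp add: S1_def axis_def)
    have S1j: "S1 (axis j 1) = (- inverse K) *\<^sub>R T (axis j 1)" using j(1) by (simp add: S1_def axis_def)
    have "opnorm1 S1 \<le> 1"
    proof (rule opnorm1_le[OF S1l])
      fix k
      show "norm (S1 (axis k 1)) \<le> 1"
      proof (cases "k = i0")
        case True
        have "norm (S1 (axis k 1)) = inverse K * K" using True S1i0 K Kpos by (simp add: nT_def)
        thus ?thesis using Kpos by simp
      next
        case False
        show ?thesis
        proof (cases "k = j")
          case True
          have "norm (S1 (axis k 1)) = inverse K * K" using True S1j j(2) Kpos by (simp add: nT_def)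
          thus ?thesis using Kpos by simp
        next
          case False
          have "S1 (axis k 1) = 0" using False \<open>k \<noteq> i0\<close> by (simp add: S1_def axis_def)
          thus ?thesis by simp
        qed
      qed
    qed simp
    hence S1in: "S1 \<in> {S \<in> Lsp. opnorm1 S \<le> 1}" using S1l unfolding Lsp_def by simp
    have "\<phi> S1 = inverse K * K" unfolding \<phi>_def S1i0 f(2) using fT K_def by simp
    moreover have "\<psi> S1 = - inverse K * K" unfolding \<psi>_def S1j g(2) using gT K_def by simp
    ultimately have "\<phi> S1 - \<psi> S1 = 2" using Kpos by simp
    hence "2 = \<bar>\<phi> S1 - \<psi> S1\<bar>" by simp
    hence "2 \<in> ?B" using S1in by (rule image_eqI)
    hence "2 \<le> Sup ?B" using bdd by (rule cSup_upper)
    moreover have "dual_norm (\<lambda>S. \<phi> S - \<psi> S) = Sup ?B" unfolding dual_norm_def by (rule refl)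
    ultimately show ?thesis using le\<epsilon> assms(4) by linarith
  next
    case False
    hence lt: "nT k < K" if "k \<noteq> i0" for k using nTK[of k] that by force
    define u where "u = (axis i0 1 :: real^'n)"
    have "M_set T = {u, -u}"
    proof (rule set_eqI iffI)+
      fix x assume "x \<in> M_set T"
      hence x: "l1norm x = 1" "norm (T x) = K" unfolding M_set_def K_def by auto
      have xz: "x$k = 0" if "k \<noteq> i0" for k
      proof (rule ccontr)
        assume "x$k \<noteq> 0"
        have "norm (T x) \<le> (\<Sum>i\<in>UNIV. \<bar>x$i\<bar> * nT i)" unfolding nT_def by (rule norm_lin_le[OF T])
        also have "\<dots> < (\<Sum>i\<in>UNIV. \<bar>x$i\<bar> * K)"
        proof (rule sum_strict_mono_ex1)
          show "\<forall>i\<in>UNIV. \<bar>x$i\<bar> * nT i \<le> \<bar>x$i\<bar> * K" using nTK by (simp add: mult_left_mono)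
          show "\<exists>a\<in>UNIV. \<bar>x$a\<bar> * nT a < \<bar>x$a\<bar> * K"
            using lt[OF that] \<open>x$k \<noteq> 0\<close> by (intro bexI[of _ k]) (auto intro: mult_strict_left_mono)
        qed simp
        also have "\<dots> = (\<Sum>i\<in>UNIV. \<bar>x$i\<bar>) * K" by (simp add: sum_distrib_right)
        also have "\<dots> = K" using x(1) by (simp add: l1norm_def)
        finally show False using x(2) by simp
      qed
      have "(\<Sum>k\<in>UNIV-{i0}. \<bar>x$k\<bar>) = 0" using xz by simp
      hence "\<bar>x$i0\<bar> = 1" using l1norm_split[of x i0] x(1) by simp
      hence "x$i0 = 1 \<or> x$i0 = -1" by linarith
      moreover have "x = x$i0 *\<^sub>R u" using xz unfolding u_def by (auto simp: vec_eq_iff axis_def)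
      ultimately show "x \<in> {u, -u}" by auto
    next
      fix x :: "real^'n" assume "x \<in> {u, -u}"
      moreover have "u \<in> M_set T" unfolding M_set_def u_def
        using K by (simp add: l1norm_axis K_def nT_def)
      moreover have "-u \<in> M_set T" unfolding M_set_def u_def
        using K by (simp add: l1norm_axis l1norm_neg K_def nT_def linear_neg[OF T])
      ultimately show "x \<in> M_set T" by blast
    qed
    moreover have "u extreme_point_of {x. l1norm x \<le> 1}" unfolding u_def by (rule axis_extreme)
    ultimately show ?thesis by blast
  qed
qed

end
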